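(* Let $M(1)^+_m$ denote the weight-$m$ subspace of $M(1)^+$. Then $M(1)^+_{10}$ (which has dimension 22) is spanned by the vectors in $$L(-1)M(1)^+_9,\qquad L(-3)M(1)^+_7,\qquad (h(-1)^4\mathbf 1)_{-3}\,h(-1)^4\mathbf 1,\qquad L(-2)^5\mathbf 1.$$
   Context: Let $\mathfrak h=\mathbb C h$ with $\langle h,h\rangle=1$, Heisenberg algebra $[h(m),h(n)]=m\delta_{m+n,0}$. Let $M(1)=\mathbb C[h(-1),h(-2),\dots]\mathbf 1$ be the Heisenberg vertex operator algebra of central charge 1 (vacuum $\mathbf 1$, $Y(h(-1)\mathbf 1,z)=\sum_nh(n)z^{-n-1}$, $Y(h(-n_1)\cdots h(-n_k)\mathbf 1,z)={:}\partial_z^{(n_1-1)}h(z)\cdots\partial_z^{(n_k-1)}h(z){:}$), with conformal vector $\omega=\frac12h(-1)^2\mathbf 1$, $Y(\omega,z)=\sum_nL(n)z^{-n-2}$, and weight of $h(-n_1)\cdots h(-n_k)\mathbf 1$ equal to $\sum n_i$. For $u\in M(1)$, $Y(u,z)=\sum_nu_nz^{-n-1}$. Let $\theta$ act by $(-1)^k$ on monomials of length $k$ and $M(1)^+$ be its fixed-point subalgebra (spanned by monomials of even length). *)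

theory Defs
  imports Complex_Main "HOL-Library.Multiset"
begin

text \<open>Model of the Heisenberg VOA M(1) = C[h(-1),h(-2),...]1 of central charge 1.
  A monomial h(-n_1)...h(-n_k)1 (all n_i >= 1) is the multiset {#n_1,...,n_k#};
  the vacuum is the empty multiset.\<close>

type_synonym mono = "nat multiset"
type_synonym vec = "mono \<Rightarrow> complex"

definition supp :: "vec \<Rightarrow> mono set" where
  "supp v = {a. v a \<noteq> 0}"

definition basis_vec :: "mono \<Rightarrow> vec" where
  "basis_vec a = (\<lambda>b. if b = a then 1 else 0)"

definition vacuum :: vec where
  "vacuum = basis_vec {#}"

definition wt :: "mono \<Rightarrow> nat" where
  "wt a = sum_mset a"

definition M1 :: "vec set" where
  "M1 = {v. finite (supp v) \<and> (\<forall>a \<in> supp v. 0 \<notin># a)}"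

definition M1plus_wt :: "nat \<Rightarrow> vec set" where
  "M1plus_wt m = {v \<in> M1. \<forall>a \<in> supp v. wt a = m \<and> even (size a)}"

definition cspan :: "vec set \<Rightarrow> vec set" where
  "cspan S = {v. \<exists>A c. finite A \<and> A \<subseteq> S \<and> v = (\<lambda>b. \<Sum>u\<in>A. c u * u b)}"

definition lin :: "(mono \<Rightarrow> vec) \<Rightarrow> vec \<Rightarrow> vec" where
  "lin f v = (\<lambda>b. \<Sum>a\<in>supp v. v a * f a b)"

text \<open>Heisenberg mode h(j) on a monomial: [h(m),h(n)] = m delta_{m+n,0}.
  h(-n) (n>0) multiplies by h(-n); h(n) (n>0) acts as n d/dh(-n); h(0) acts as 0.\<close>
definition hmode :: "int \<Rightarrow> mono \<Rightarrow> vec" where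
  "hmode j a =
     (if j < 0 then basis_vec (a + {# nat (- j) #})
      else if j = 0 then (\<lambda>_. 0)
      else (\<lambda>b. of_int j * of_nat (count a (nat j)) * basis_vec (a - {# nat j #}) b))"

definition apply_modes :: "int list \<Rightarrow> vec \<Rightarrow> vec" where
  "apply_modes js v = foldr (\<lambda>j w. lin (hmode j) w) js v"

text \<open>Normal-ordered product :h(j_1)...h(j_r): (annihilation modes j >= 0 to the right).\<close>
definition nprod :: "int list \<Rightarrow> vec \<Rightarrow> vec" where
  "nprod js v = apply_modes (filter (\<lambda>j. j < 0) js @ filter (\<lambda>j. 0 \<le> j) js) v"

text \<open>Tuples (j_1,...,j_k) with sum s that can act nontrivially on a monomial of weight w:
  every entry is <= w (a positive mode larger than w annihilates), hence every entry is
  >= s - k*w.  All other terms of the formal sum vanish.\<close>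
definition tuples :: "nat \<Rightarrow> int \<Rightarrow> nat \<Rightarrow> int list set" where
  "tuples k s w = {js. length js = k \<and> sum_list js = s \<and> set js \<subseteq> {s - int k * int w .. int w}}"

text \<open>Mode u_n of u = h(-1)^k 1:  Y(u,z) = :h(z)^k: = sum_n u_n z^{-n-1}, so
  u_n = sum_{j_1+...+j_k = n-k+1} :h(j_1)...h(j_k):.\<close>
definition hpow_mode :: "nat \<Rightarrow> int \<Rightarrow> vec \<Rightarrow> vec" where
  "hpow_mode k n = lin (\<lambda>a b. \<Sum>js\<in>tuples k (n - int k + 1) (wt a).
                          nprod js (basis_vec a) b)"

text \<open>Virasoro operators: omega = 1/2 h(-1)^2 1, L(n) = omega_{n+1}.\<close>
definition Lop :: "int \<Rightarrow> vec \<Rightarrow> vec" where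
  "Lop n v = (\<lambda>b. (1/2) * hpow_mode 2 (n + 1) v b)"

end

theory Submission
  imports Defs
begin


definition vl :: "(nat list \<times> int) list \<Rightarrow> vec" where
  "vl xs = (\<lambda>b. \<Sum>(l,c)\<leftarrow>xs. if mset l = b then of_int c else 0)"

lemma vl_Nil[simp]: "vl [] = (\<lambda>_. 0)" by (simp add: vl_def)
lemma vl_Cons: "vl ((l,c)#xs) b = (if mset l = b then of_int c else 0) + vl xs b"
  by (simp add: vl_def)
lemma vl_append: "vl (xs @ ys) b = vl xs b + vl ys b" by (simp add: vl_def)
lemma vl_concat: "vl (concat xss) b = (\<Sum>xs\<leftarrow>xss. vl xs b)"
  by (induction xss) (simp_all add: vl_append)
lemma vl_scale: "vl (map (\<lambda>(m,d). (m, c*d)) xs) b = of_int c * vl xs b"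
  by (induction xs) (auto simp: vl_Cons algebra_simps)
lemma basis_vl: "basis_vec (mset l) = vl [(l,1)]"
  by (auto simp: vl_def basis_vec_def)

lemma supp_vl: "supp (vl xs) \<subseteq> mset ` fst ` set xs"
proof
  fix b assume "b \<in> supp (vl xs)"
  hence "vl xs b \<noteq> 0" by (simp add: supp_def)
  thus "b \<in> mset ` fst ` set xs"
    by (induction xs) (auto simp: vl_Cons split: if_splits)
qed

lemma lin_superset:
  assumes "finite S" "supp v \<subseteq> S"
  shows "lin f v b = (\<Sum>a\<in>S. v a * f a b)"
  unfolding lin_def
  by (rule sum.mono_neutral_left) (use assms in \<open>auto simp: supp_def\<close>)

lemma sum_vl_aux:
  assumes "finite S" "mset ` fst ` set xs \<subseteq> S"
  shows "(\<Sum>a\<in>S. vl xs a * g a) = (\<Sum>(l,c)\<leftarrow>xs. of_int c * g (mset l))"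
  using assms(2)
proof (induction xs)
  case Nil then show ?case by simp
next
  case (Cons x xs)
  obtain l c where x: "x = (l,c)" by fastforce
  have "(\<Sum>a\<in>S. vl (x#xs) a * g a) = (\<Sum>a\<in>S. (if mset l = a then of_int c * g a else 0)) + (\<Sum>a\<in>S. vl xs a * g a)"
    unfolding sum.distrib[symmetric] by (rule sum.cong) (auto simp: x vl_Cons distrib_right)
  also have "(\<Sum>a\<in>S. (if mset l = a then of_int c * g a else 0)) = of_int c * g (mset l)"
    using Cons.prems x assms(1) by (simp add: sum.delta)
  finally show ?case using Cons by (simp add: x)
qed

definition lin_l :: "(nat list \<Rightarrow> (nat list \<times> int) list) \<Rightarrow> (nat list \<times> int) list \<Rightarrow> (nat list \<times> int) list" where
  "lin_l F xs = concat (map (\<lambda>(l,c). map (\<lambda>(m,d). (m, c*d)) (F l)) xs)"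

lemma lin_l_Nil[simp]: "lin_l F [] = []" by (simp add: lin_l_def)

lemma vl_lin_l: "vl (lin_l F xs) b = (\<Sum>(l,c)\<leftarrow>xs. of_int c * vl (F l) b)"
  by (induction xs) (auto simp: lin_l_def vl_append vl_scale)

lemma lin_vl:
  assumes "\<And>l. f (mset l) = vl (F l)"
  shows "lin f (vl xs) = vl (lin_l F xs)"
proof
  fix b
  have "lin f (vl xs) b = (\<Sum>a\<in>mset ` fst ` set xs. vl xs a * f a b)"
    by (rule lin_superset) (auto simp: supp_vl)
  also have "\<dots> = (\<Sum>(l,c)\<leftarrow>xs. of_int c * f (mset l) b)"
    by (rule sum_vl_aux) auto
  also have "\<dots> = vl (lin_l F xs) b" by (simp add: vl_lin_l assms)
  finally show "lin f (vl xs) b = vl (lin_l F xs) b" .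
qed

definition hmode_l :: "int \<Rightarrow> nat list \<Rightarrow> (nat list \<times> int) list" where
  "hmode_l j l = (if j < 0 then [(insort (nat (-j)) l, 1)] else if j = 0 then []
     else if count_list l (nat j) = 0 then []
     else [(remove1 (nat j) l, j * int (count_list l (nat j)))])"

lemma hmode_vl: "hmode j (mset l) = vl (hmode_l j l)"
  by (auto simp: hmode_def hmode_l_def vl_def basis_vec_def count_mset fun_eq_iff)

definition apply_l :: "int list \<Rightarrow> (nat list \<times> int) list \<Rightarrow> (nat list \<times> int) list" where
  "apply_l js xs = foldr (\<lambda>j ys. lin_l (hmode_l j) ys) js xs"

lemma apply_vl: "apply_modes js (vl xs) = vl (apply_l js xs)"
  by (induction js) (auto simp: apply_modes_def apply_l_def intro!: lin_vl hmode_vl)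

definition nprod_l :: "int list \<Rightarrow> (nat list \<times> int) list \<Rightarrow> (nat list \<times> int) list" where
  "nprod_l js xs = apply_l (filter (\<lambda>j. j < 0) js @ filter (\<lambda>j. 0 \<le> j) js) xs"

lemma nprod_vl: "nprod js (vl xs) = vl (nprod_l js xs)"
  by (simp add: nprod_def nprod_l_def apply_vl)

fun enum :: "int \<Rightarrow> int \<Rightarrow> int list \<Rightarrow> nat \<Rightarrow> int \<Rightarrow> int list list" where
  "enum lo hi E 0 s = (if s = 0 then [[]] else [])"
| "enum lo hi E (Suc k) s = concat (map (\<lambda>e. map (Cons e) (enum lo hi E k (s - e)))
      (filter (\<lambda>e. int k * lo \<le> s - e \<and> s - e \<le> int k * hi) E))"

lemma sum_bounds:
  "set js \<subseteq> {lo..hi} \<Longrightarrow> int (length js) * lo \<le> sum_list js \<and> sum_list js \<le> int (length js) * hi"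
  by (induction js) (auto simp: algebra_simps)

lemma enum_set:
  assumes "\<forall>e\<in>set E. lo \<le> e \<and> e \<le> hi"
  shows "set (enum lo hi E k s) = {js. length js = k \<and> sum_list js = s \<and> set js \<subseteq> set E}"
proof (induction k arbitrary: s)
  case 0 then show ?case by auto
next
  case (Suc k)
  show ?case
  proof (intro set_eqI iffI)
    fix js assume "js \<in> set (enum lo hi E (Suc k) s)"
    then show "js \<in> {js. length js = Suc k \<and> sum_list js = s \<and> set js \<subseteq> set E}"
      using Suc by auto
  next
    fix js assume js: "js \<in> {js. length js = Suc k \<and> sum_list js = s \<and> set js \<subseteq> set E}"
    then obtain e js' where e: "js = e # js'" "length js' = k" "e \<in> set E" "set js' \<subseteq> set E"
      "sum_list js' = s - e"
      by (cases js) auto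
    have "set js' \<subseteq> {lo..hi}" using e assms by auto
    from sum_bounds[OF this] have "int k * lo \<le> s - e \<and> s - e \<le> int k * hi" using e by simp
    then show "js \<in> set (enum lo hi E (Suc k) s)" using e Suc by auto
  qed
qed

lemma apply_l_Nil[simp]: "apply_l js [] = []"
  by (induction js) (auto simp: apply_l_def)

lemma lin_l_zero: "(\<forall>(l,c)\<in>set xs. F l = []) \<Longrightarrow> lin_l F xs = []"
  by (auto simp: lin_l_def)

lemma mem_lin_l: "(l',c') \<in> set (lin_l F ys) \<Longrightarrow> \<exists>m d e. (m,d)\<in>set ys \<and> (l',e) \<in> set (F m) \<and> c' = d * e"
  by (auto simp: lin_l_def)

lemma apply_l_Cons: "apply_l (j#js) xs = lin_l (hmode_l j) (apply_l js xs)"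
  by (simp add: apply_l_def)

lemma apply_keys_sub:
  "\<forall>j\<in>set P. 0 \<le> j \<Longrightarrow> (l',c) \<in> set (apply_l P [(l,1)]) \<Longrightarrow> set l' \<subseteq> set l"
proof (induction P arbitrary: l' c)
  case Nil then show ?case by (simp add: apply_l_def)
next
  case (Cons j P)
  from Cons.prems(2) obtain m d e where m: "(m,d) \<in> set (apply_l P [(l,1)])" "(l',e) \<in> set (hmode_l j m)"
    by (auto simp: apply_l_Cons dest!: mem_lin_l)
  have "set m \<subseteq> set l" using Cons m by auto
  moreover have "set l' \<subseteq> set m" using m(2) Cons.prems(1)
    by (auto simp: hmode_l_def split: if_splits dest: set_mp[OF set_remove1_subset])
  ultimately show ?case by blast
qed

lemma apply_zero:
  "\<forall>j\<in>set P. 0 \<le> j \<Longrightarrow> j0 \<in> set P \<Longrightarrow> j0 = 0 \<or> nat j0 \<notin> set l \<Longrightarrow> apply_l P [(l,1)] = []"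
proof (induction P)
  case Nil then show ?case by simp
next
  case (Cons j P)
  show ?case
  proof (cases "j0 \<in> set P")
    case True then show ?thesis using Cons by (simp add: apply_l_Cons)
  next
    case False
    hence "j0 = j" using Cons by auto
    have "\<forall>(m,d)\<in>set (apply_l P [(l,1)]). hmode_l j m = []"
    proof (clarify)
      fix m d assume "(m,d) \<in> set (apply_l P [(l,1)])"
      hence "set m \<subseteq> set l" using apply_keys_sub Cons.prems(1) by (metis list.set_intros(2))
      then show "hmode_l j m = []" using Cons.prems \<open>j0 = j\<close>
        by (auto simp: hmode_l_def count_list_0_iff)
    qed
    then show ?thesis by (simp add: apply_l_Cons lin_l_zero)
  qed
qed

lemma nprod_zero:
  assumes "j0 \<in> set js" "0 \<le> j0" "j0 = 0 \<or> nat j0 \<notin> set l"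
  shows "nprod_l js [(l,1)] = []"
proof -
  have "apply_l (filter (\<lambda>j. 0 \<le> j) js) [(l,1)] = []"
    by (rule apply_zero[of _ j0]) (use assms in auto)
  moreover have "nprod_l js [(l,1)] = apply_l (filter (\<lambda>j. j < 0) js) (apply_l (filter (\<lambda>j. 0 \<le> j) js) [(l,1)])"
    by (simp add: nprod_l_def apply_l_def)
  ultimately show ?thesis by simp
qed

definition hpow_l1 :: "nat \<Rightarrow> int \<Rightarrow> nat list \<Rightarrow> (nat list \<times> int) list" where
  "hpow_l1 k n l = (let s = n - int k + 1; w = int (sum_list l); lo = s - int k * w;
     E = [lo..-1] @ filter (\<lambda>j. 0 < j \<and> lo \<le> j \<and> j \<le> w) (map int (remdups l))
     in concat (map (\<lambda>js. nprod_l js [(l,1)]) (remdups (enum lo w E k s))))"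

lemma hpow_l1_correct:
  "(\<lambda>b. \<Sum>js\<in>tuples k (n - int k + 1) (wt (mset l)). nprod js (basis_vec (mset l)) b) = vl (hpow_l1 k n l)"
proof
  fix b
  define s where "s = n - int k + 1"
  define w where "w = sum_list l"
  define lo where "lo = s - int k * int w"
  define E where "E = [lo..-1] @ filter (\<lambda>j. 0 < j \<and> lo \<le> j \<and> j \<le> int w) (map int (remdups l))"
  have wt: "wt (mset l) = w" by (simp add: wt_def w_def sum_mset_sum_list)
  have Eb: "\<forall>e\<in>set E. lo \<le> e \<and> e \<le> int w" by (auto simp: E_def)
  have ES: "set (enum lo (int w) E k s) = {js. length js = k \<and> sum_list js = s \<and> set js \<subseteq> set E}"
    by (rule enum_set[OF Eb])
  have T: "set (enum lo (int w) E k s) \<subseteq> tuples k s w"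
    using Eb unfolding ES tuples_def lo_def[symmetric] by (auto simp: subset_iff)
  have fin: "finite (tuples k s w)"
    by (rule finite_subset[OF _ finite_lists_length_eq[of "{s - int k * int w..int w}" k]])
       (auto simp: tuples_def)
  have Z: "nprod js (basis_vec (mset l)) b = 0" if js: "js \<in> tuples k s w - set (enum lo (int w) E k s)" for js
  proof -
    from js obtain j where j: "j \<in> set js" "j \<notin> set E" "lo \<le> j" "j \<le> int w"
      unfolding ES tuples_def lo_def[symmetric] by (auto simp: subset_iff)
    have "0 \<le> j" using j by (auto simp: E_def)
    moreover have "j = 0 \<or> nat j \<notin> set l"
    proof (rule ccontr)
      assume "\<not> (j = 0 \<or> nat j \<notin> set l)"
      hence "0 < j" "nat j \<in> set l" using \<open>0 \<le> j\<close> by auto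
      hence "j \<in> set E" using j by (force simp: E_def image_iff)
      with j show False by simp
    qed
    ultimately have "nprod_l js [(l,1)] = []" using nprod_zero j(1) by blast
    thus ?thesis by (simp add: basis_vl nprod_vl)
  qed
  have "(\<Sum>js\<in>tuples k s (wt (mset l)). nprod js (basis_vec (mset l)) b)
        = (\<Sum>js\<in>set (enum lo (int w) E k s). nprod js (basis_vec (mset l)) b)"
    unfolding wt by (rule sum.mono_neutral_right[OF fin T]) (use Z in auto)
  also have "\<dots> = vl (hpow_l1 k n l) b"
    by (simp add: sum.set_conv_list hpow_l1_def Let_def s_def w_def lo_def E_def vl_concat
        basis_vl nprod_vl o_def)
  finally show "(\<Sum>js\<in>tuples k (n - int k + 1) (wt (mset l)). nprod js (basis_vec (mset l)) b) = vl (hpow_l1 k n l) b"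
    by (simp add: s_def)
qed

lemma hpow_vl: "hpow_mode k n (vl xs) = vl (lin_l (hpow_l1 k n) xs)"
  unfolding hpow_mode_def by (rule lin_vl) (simp add: hpow_l1_correct)

lemma Lop_vl: "Lop n (vl xs) = (\<lambda>b. 1/2 * vl (lin_l (hpow_l1 2 (n+1)) xs) b)"
  by (simp add: Lop_def hpow_vl)


definition coord :: "(nat list \<times> int) list \<Rightarrow> nat list \<Rightarrow> int" where
  "coord xs p = sum_list (map (\<lambda>(l,c). if l = p then c else 0) xs)"
definition P10 :: "nat list list" where
 "P10 = [[1,1,1,1,1,1,1,1,1,1],
  [1,1,1,1,1,1,2,2],
  [1,1,2,2,2,2],
  [1,1,1,1,1,1,1,3],
  [1,1,1,2,2,3],
  [1,1,1,1,3,3],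
  [2,2,3,3],
  [1,3,3,3],
  [1,1,1,1,2,4],
  [2,2,2,4],
  [1,2,3,4],
  [1,1,4,4],
  [1,1,1,1,1,5],
  [1,2,2,5],
  [1,1,3,5],
  [5,5],
  [1,1,2,6],
  [4,6],
  [1,1,1,7],
  [3,7],
  [2,8],
  [1,9]]"

definition m9 :: "nat list list" where
 "m9 = [[1,1,1,1,1,1,1,2],
  [1,1,1,2,2,2],
  [1,1,1,1,2,3],
  [2,2,2,3],
  [1,2,3,3],
  [1,1,1,1,1,4],
  [1,2,2,4],
  [1,1,3,4],
  [1,1,2,5],
  [4,5],
  [1,1,1,6],
  [3,6],
  [2,7],
  [1,8]]"

definition m7 :: "nat list list" where
 "m7 = [[1,1,1,1,1,2],
  [1,2,2,2],
  [1,1,2,3],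
  [1,1,1,4],
  [3,4],
  [2,5]]"

definition MTlit :: "int list list" where
 "MTlit = [[0,0,0,0,0,0,0,0,0,0,0,0,0,0,0,0,0,0,0,0,0,1],
  [14,0,0,0,0,0,0,0,0,0,0,0,0,0,2,0,0,0,0,0,6,0],
  [0,6,0,0,0,0,0,0,0,0,0,0,0,0,0,2,0,0,0,0,0,0],
  [4,0,0,0,0,0,0,0,0,0,0,0,0,0,0,0,0,0,0,0,4,40],
  [0,12,8,0,0,0,0,0,0,0,0,0,0,0,0,0,2,0,0,0,48,0],
  [0,0,4,0,0,0,0,0,0,0,0,0,0,0,0,0,0,0,0,0,48,320],
  [0,0,0,12,2,0,0,0,0,0,0,0,0,0,0,0,0,0,0,0,0,0],
  [0,0,0,0,4,0,0,0,0,0,0,0,0,0,0,0,0,0,0,0,0,320],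
  [0,0,6,0,0,10,0,0,0,0,0,0,0,0,10,0,0,2,0,0,96,0],
  [0,0,0,6,0,0,2,0,0,0,0,0,0,0,0,2,0,0,0,0,0,0],
  [0,0,0,0,12,0,8,4,0,0,0,0,0,0,0,0,4,0,2,0,0,0],
  [0,0,0,0,0,0,0,6,0,0,0,0,0,0,0,0,0,6,0,0,72,0],
  [0,0,0,0,0,8,0,0,0,0,0,0,0,0,4,0,0,0,0,0,48,240],
  [0,0,0,0,0,0,8,0,4,0,0,0,0,0,0,12,0,0,0,2,0,0],
  [0,0,0,0,0,0,0,8,4,0,0,0,0,0,0,0,4,0,0,0,144,1680],
  [0,0,0,0,0,0,0,0,0,8,0,0,0,0,0,0,0,0,0,4,0,864],
  [0,0,0,0,0,0,0,0,10,0,6,0,0,0,0,0,6,0,0,0,144,0],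
  [0,0,0,0,0,0,0,0,0,10,0,6,0,0,0,0,0,0,6,0,0,0],
  [0,0,0,0,0,0,0,0,0,0,12,0,0,0,0,0,0,8,0,0,144,1200],
  [0,0,0,0,0,0,0,0,0,0,0,12,4,0,0,0,0,0,8,0,0,1920],
  [0,0,0,0,0,0,0,0,0,0,0,0,14,2,0,0,0,0,0,10,0,0],
  [0,0,0,0,0,0,0,0,0,0,0,0,0,16,0,0,0,0,0,0,96,3360]]"

definition Clit :: "int list list" where
 "Clit = [[103680,7549440,4193280,983040,-5898240,1935360,19699200,967680,39260160,2750976,-3363840,-43015680,16796160,-10437120,1797120,-22648320,-41886720,9123840,38430720,-21427200,-840960,73728],
  [2520,59760,30240,0,0,1728,179280,142560,224640,45360,105120,88560,62640,15120,26784,-179280,-419040,-112320,-164160,-90720,-2520,0],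
  [-3816,2544,-45792,0,0,-30528,-29232,-76320,-61056,-31824,-66144,-63888,-42192,-22896,15264,29232,76320,30528,116928,63648,3816,0],
  [9612,-209160,-105840,0,0,-6048,-627480,-498960,-786240,-158760,-367920,-309960,-219240,-52920,-93744,627480,1466640,393120,574560,317520,8820,0],
  [1908,4872,22896,0,0,15264,14616,38160,30528,15912,33072,31944,21096,11448,-7632,-14616,-38160,-15264,-58464,-31824,-1908,0],
  [-2304,26112,-9216,0,0,-18432,78336,9216,73728,-4608,-3072,-10752,-4608,-13824,9216,-78336,-175104,-36864,18432,9216,2304,0],
  [792,-528,9504,6144,0,6336,-20016,15840,12672,-22608,13728,-42384,-32976,4752,-3168,1584,-15840,-6336,80064,45216,-792,0],
  [1116,-744,13392,-3072,18432,8928,6984,22320,17856,38520,19344,74328,54072,6696,-4464,2232,-22320,-8928,-138528,-77040,-1116,0],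
  [-1008,-23904,-12096,0,0,-8064,-71712,-57024,-89856,-18144,-42048,-35424,-25056,-6048,4032,71712,167616,44928,65664,36288,1008,0],
  [-1584,1056,-19008,0,0,-12672,40032,-31680,-25344,45216,-27456,84768,65952,-9504,6336,-3168,31680,12672,-160128,-90432,1584,0],
  [-504,336,-6048,0,0,-4032,1008,-10080,-8064,-9072,-8736,-17712,-12528,-3024,2016,-1008,10080,4032,32832,18144,504,0],
  [36,10216,432,0,0,288,30648,13008,37440,6792,624,12968,9672,216,-144,-30648,-62160,-288,-24288,-13584,-36,0],
  [1260,29880,15120,0,0,19296,89640,71280,112320,22680,52560,44280,31320,7560,-5040,-89640,-209520,-56160,-82080,-45360,-1260,0],
  [900,-600,10800,0,0,7200,-1800,18000,14400,-2232,15600,-3480,-3960,5400,-3600,1800,-18000,-7200,7200,4464,-900,0],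
  [225,-7830,2700,0,0,1800,-23490,4500,-24048,-558,3900,-870,-990,1350,-900,23490,41580,-1800,1800,1116,-225,0],
  [-630,420,-7560,0,0,-5040,1260,-12600,-10080,-2124,-10920,8580,-15660,-3780,2520,-1260,12600,5040,-5040,22680,630,0],
  [-450,3372,-5400,0,0,-3600,10116,-9000,11232,1116,-7800,1740,1980,-2700,1800,-10116,-9432,3600,-3600,-2232,450,0],
  [504,-336,6048,0,0,4032,-1008,10080,8064,9072,8736,-6864,12528,3024,-2016,1008,-10080,-4032,4032,-18144,-504,0],
  [225,-1686,2700,0,0,1800,-5058,4500,-5616,-558,10044,-870,-990,1350,-900,5058,4716,-1800,1800,1116,-225,0],
  [-252,168,-3024,0,0,-2016,504,-5040,-4032,-4536,-4368,9576,-6264,-1512,1008,-504,5040,2016,-2016,9072,252,0],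
  [72,-48,864,0,0,576,-144,1440,1152,1296,1248,-2736,7056,432,-288,144,-1440,-576,576,-2592,-72,0],
  [-9,6,-108,0,0,-72,18,-180,-144,-162,-156,342,-882,4554,36,-18,180,72,-72,324,9,0]]"

definition Dc :: int where "Dc = 73728"
definition Yl :: "(nat list \<times> int) list" where
  "Yl = (lin_l (hpow_l1 2 (-1)) ^^ 5) [([],1)]"
definition Gs :: "(nat list \<times> int) list list" where
  "Gs = map (hpow_l1 2 0) m9 @ map (hpow_l1 2 (-2)) m7 @ [hpow_l1 4 (-3) [1,1,1,1], Yl]"
lemma MT_eq: "map (\<lambda>p. map (\<lambda>G. coord G p) Gs) P10 = MTlit"
  by code_simp
lemma keys_ok: "\<forall>G\<in>set Gs. \<forall>x\<in>set G. fst x \<in> set P10"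
  by code_simp
lemma check: "map (\<lambda>crow. map (\<lambda>mcol. sum_list (map2 (*) crow mcol)) MTlit) Clit
   = map (\<lambda>q. map (\<lambda>p. if p = q then Dc else 0) [0..<22]) [0..<22]"
  by code_simp

lemma len_lits: "length P10 = 22" "length Gs = 22" "length MTlit = 22" "length Clit = 22"
  "\<forall>r\<in>set MTlit. length r = 22" "\<forall>r\<in>set Clit. length r = 22" "distinct P10"
  by code_simp+

lemma sum_list_map2_mult:
  "length xs = n \<Longrightarrow> length ys = n \<Longrightarrow> sum_list (map2 (*) xs ys) = (\<Sum>i<n. xs!i * ys!i)"
  by (simp add: sum_list_sum_nth atLeast0LessThan)

lemma check_pt:
  assumes "q < 22" "j < 22"
  shows "(\<Sum>i<22. Clit!q!i * MTlit!j!i) = (if j = q then Dc else 0)"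
proof -
  have "(map (\<lambda>crow. map (\<lambda>mcol. sum_list (map2 (*) crow mcol)) MTlit) Clit)!q!j
      = (map (\<lambda>q. map (\<lambda>p. if p = q then Dc else 0) [0..<22]) [0..<22])!q!j"
    by (simp only: check)
  then have "sum_list (map2 (*) (Clit!q) (MTlit!j)) = (if j = q then Dc else 0)"
    using assms len_lits by simp
  moreover have "length (Clit!q) = 22" "length (MTlit!j) = 22"
    using assms len_lits by (simp_all add: nth_mem)
  ultimately show ?thesis by (simp add: sum_list_map2_mult)
qed

lemma MT_pt:
  assumes "i < 22" "j < 22"
  shows "coord (Gs!i) (P10!j) = MTlit!j!i"
proof -
  have "(map (\<lambda>p. map (\<lambda>G. coord G p) Gs) P10)!j!i = MTlit!j!i" by (simp only: MT_eq)
  thus ?thesis using assms len_lits by simp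
qed

lemma coord_Cons: "coord ((l,c)#G) p = (if l = p then c else 0) + coord G p"
  by (simp add: coord_def)

lemma vl_expand:
  assumes "distinct Ps" "\<forall>x\<in>set G. fst x \<in> set Ps"
  shows "vl G b = (\<Sum>p\<leftarrow>Ps. of_int (coord G p) * vl [(p,1)] b)"
  using assms(2)
proof (induction G)
  case Nil then show ?case by (simp add: coord_def)
next
  case (Cons x G)
  obtain l c where x: "x = (l,c)" by fastforce
  have l: "l \<in> set Ps" using Cons.prems x by auto
  have "(\<Sum>p\<leftarrow>Ps. of_int (coord (x#G) p) * vl [(p,1)] b)
     = (\<Sum>p\<leftarrow>Ps. (if l = p then of_int c * vl [(p,1)] b else 0)) + (\<Sum>p\<leftarrow>Ps. of_int (coord G p) * vl [(p,1)] b)"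
    unfolding sum_list_addf[symmetric]
    by (intro arg_cong[where f=sum_list] map_cong) (auto simp: x coord_Cons distrib_right)
  also have "(\<Sum>p\<leftarrow>Ps. (if l = p then of_int c * vl [(p,1)] b else 0)) = of_int c * vl [(l,1)] b"
    using l assms(1) by (simp add: sum_list_distinct_conv_sum_set sum.delta)
  finally show ?case using Cons by (simp add: x vl_Cons)
qed

lemma cert:
  assumes "q < 22"
  shows "of_int Dc * vl [(P10!q,1)] b = (\<Sum>i<22. of_int (Clit!q!i) * vl (Gs!i) b)"
proof -
  have G: "vl (Gs!i) b = (\<Sum>j<22. of_int (MTlit!j!i) * vl [(P10!j,1)] b)" if "i < 22" for i
  proof -
    have "Gs!i \<in> set Gs" using that len_lits by simp
    hence "vl (Gs!i) b = (\<Sum>p\<leftarrow>P10. of_int (coord (Gs!i) p) * vl [(p,1)] b)"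
      using keys_ok len_lits by (intro vl_expand) auto
    also have "\<dots> = (\<Sum>j<22. of_int (coord (Gs!i) (P10!j)) * vl [(P10!j,1)] b)"
      using len_lits by (simp add: sum_list_sum_nth atLeast0LessThan)
    also have "\<dots> = (\<Sum>j<22. of_int (MTlit!j!i) * vl [(P10!j,1)] b)"
      using that by (intro sum.cong) (simp_all add: MT_pt)
    finally show ?thesis .
  qed
  have "(\<Sum>i<22. of_int (Clit!q!i) * vl (Gs!i) b)
      = (\<Sum>i<22. \<Sum>j<22. of_int (Clit!q!i * MTlit!j!i) * vl [(P10!j,1)] b)"
    by (intro sum.cong) (simp_all add: G sum_distrib_left mult.assoc)
  also have "\<dots> = (\<Sum>j<22. of_int (\<Sum>i<22. Clit!q!i * MTlit!j!i) * vl [(P10!j,1)] b)"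
    by (subst sum.swap) (simp add: of_int_sum sum_distrib_right)
  also have "\<dots> = (\<Sum>j<22. (if j = q then of_int Dc * vl [(P10!j,1)] b else 0))"
    using assms by (intro sum.cong) (simp_all add: check_pt)
  also have "\<dots> = of_int Dc * vl [(P10!q,1)] b" using assms by simp
  finally show ?thesis by simp
qed



fun parts :: "nat \<Rightarrow> nat \<Rightarrow> nat list list" where
  "parts 0 m = [[]]"
| "parts (Suc n) m = concat (map (\<lambda>k. map (Cons k) (parts (Suc n - k) k)) [max 1 m..<Suc (Suc n)])"

lemma parts_Suc_mem:
  assumes "k \<in> set [max 1 m..<Suc (Suc n0)]" "l' \<in> set (parts (Suc n0 - k) k)"
  shows "k # l' \<in> set (parts (Suc n0) m)"
proof -
  have "k # l' \<in> set (map (Cons k) (parts (Suc n0 - k) k))" using assms(2) by simp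
  hence "\<exists>k'\<in>set [max 1 m..<Suc (Suc n0)]. k # l' \<in> set (map (Cons k') (parts (Suc n0 - k') k'))"
    using assms(1) by blast
  thus ?thesis unfolding parts.simps(2) set_concat set_map[of _ "[max 1 m..<Suc (Suc n0)]"] by blast
qed

lemma parts_complete:
  "(\<forall>x\<in>#a. m \<le> x \<and> 0 < x) \<Longrightarrow> sum_mset a = n \<Longrightarrow> \<exists>l\<in>set (parts n m). mset l = a"
proof (induction n arbitrary: a m rule: less_induct)
  case (less n)
  show ?case
  proof (cases "a = {#}")
    case True
    have "n = 0" using less.prems(2) True by simp
    then show ?thesis using True by simp
  next
    case False
    define k where "k = Min (set_mset a)"
    have kin: "k \<in># a" using False by (simp add: k_def)
    have kmin: "\<forall>x\<in>#a. k \<le> x" by (simp add: k_def)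
    define a' where "a' = a - {#k#}"
    have a: "a = add_mset k a'" using kin by (simp add: a'_def)
    have kpos': "0 < k \<and> m \<le> k" using less.prems(1) kin by blast
    have kpos: "0 < k" "m \<le> k" using kpos' by simp_all
    have sa: "sum_mset a' = n - k" "k \<le> n" using less.prems(2) unfolding a by auto
    have a'p: "\<forall>x\<in>#a'. k \<le> x \<and> 0 < x" using kmin less.prems(1) unfolding a by auto
    have lt: "n - k < n" using kpos sa by linarith
    obtain l' where l': "l' \<in> set (parts (n - k) k)" "mset l' = a'"
      using less.IH[OF lt a'p sa(1)] by blast
    obtain n0 where n0: "n = Suc n0" using sa kpos by (cases n) auto
    have kr: "k \<in> set [max 1 m..<Suc (Suc n0)]" unfolding set_upt using kpos sa n0 by auto
    have l'': "l' \<in> set (parts (Suc n0 - k) k)" using l' n0 by simp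
    have "k # l' \<in> set (parts n m)" unfolding n0 by (rule parts_Suc_mem[OF kr l''])
    moreover have "mset (k # l') = a" using l' a by simp
    ultimately show ?thesis by blast
  qed
qed

lemma P10_parts: "set (filter (\<lambda>l. even (length l)) (parts 10 1)) = set P10"
  by code_simp

lemma P10_complete:
  assumes "0 \<notin># a" "wt a = 10" "even (size a)"
  shows "\<exists>q<22. a = mset (P10!q)"
proof -
  have nz: "x \<noteq> 0" if "x \<in># a" for x using that assms(1) by metis
  hence "\<forall>x\<in>#a. 1 \<le> x \<and> 0 < x" by (metis One_nat_def Suc_leI gr0I)
  then obtain l where l: "l \<in> set (parts 10 1)" "mset l = a"
    using parts_complete[of a 1 10] assms(2) by (auto simp: wt_def)
  hence "l \<in> set P10" using assms(3) l(2) unfolding P10_parts[symmetric] by auto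
  then obtain q where "q < length P10" "P10!q = l" by (auto simp: in_set_conv_nth)
  thus ?thesis using l len_lits by auto
qed

section \<open>Grading invariants\<close>

definition grd :: "nat \<Rightarrow> bool \<Rightarrow> vec \<Rightarrow> bool" where
  "grd w p v \<longleftrightarrow> v \<in> M1 \<and> (\<forall>a\<in>supp v. wt a = w \<and> even (size a) = p)"

lemma M1plus_grd: "v \<in> M1plus_wt m \<longleftrightarrow> grd m True v"
  by (auto simp: M1plus_wt_def grd_def)

lemma lin_supp: "supp (lin f v) \<subseteq> (\<Union>a\<in>supp v. supp (f a))"
proof
  fix b assume "b \<in> supp (lin f v)"
  hence "(\<Sum>a\<in>supp v. v a * f a b) \<noteq> 0" by (simp add: supp_def lin_def)
  then obtain a where "a \<in> supp v" "v a * f a b \<noteq> 0" by (meson sum.neutral)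
  thus "b \<in> (\<Union>a\<in>supp v. supp (f a))" by (auto simp: supp_def)
qed

lemma enum_len_sum: "js \<in> set (enum lo hi E k s) \<Longrightarrow> length js = k \<and> sum_list js = s"
  by (induction k arbitrary: js s) auto

lemma sum_list_insort: "sum_list (insort x l) = x + sum_list (l::nat list)"
  by (simp flip: sum_mset_sum_list)

lemma sum_list_remove1': "x \<in> set l \<Longrightarrow> sum_list (remove1 x l) + x = sum_list (l::nat list)"
proof -
  assume "x \<in> set l"
  hence "x \<in># mset l" by simp
  hence "sum_mset (mset l) = x + sum_mset (mset l - {#x#})" by (rule sum_mset.remove)
  thus ?thesis by (simp flip: sum_mset_sum_list)
qed

lemma keys_apply:
  "(l',c) \<in> set (apply_l js [(l,1)]) \<Longrightarrow> int (sum_list l') = int (sum_list l) - sum_list js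
     \<and> (even (length l') = (even (length l) = even (length js))) \<and> (0 \<notin> set l \<longrightarrow> 0 \<notin> set l')"
proof (induction js arbitrary: l' c)
  case Nil then show ?case by (simp add: apply_l_def)
next
  case (Cons j js)
  from Cons.prems obtain m d e where m: "(m,d) \<in> set (apply_l js [(l,1)])" "(l',e) \<in> set (hmode_l j m)"
    by (auto simp: apply_l_Cons dest!: mem_lin_l)
  note IH = Cons.IH[OF m(1)]
  show ?case
  proof (cases "j < 0")
    case True
    hence "l' = insort (nat (-j)) m" using m(2) by (simp add: hmode_l_def)
    then show ?thesis using IH True by (auto simp: sum_list_insort length_insort set_insort_key)
  next
    case False
    hence j: "0 < j" "count_list m (nat j) \<noteq> 0" "l' = remove1 (nat j) m" using m(2)
      by (auto simp: hmode_l_def split: if_splits)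
    hence jm: "nat j \<in> set m" by (simp add: count_list_0_iff)
    have "int (sum_list l') + j = int (sum_list m)"
      using sum_list_remove1'[OF jm] j by (metis of_nat_add int_nat_eq less_le)
    moreover have lm: "length m = Suc (length l')" using jm j by (simp add: length_remove1)
      (metis Suc_pred length_pos_if_in_set)
    moreover have "set l' \<subseteq> set m" using j by (simp add: set_remove1_subset)
    ultimately show ?thesis using IH by (auto simp: lm)
  qed
qed

lemma mset_split_filter: "mset (filter (\<lambda>j::int. j < 0) js @ filter (\<lambda>j. 0 \<le> j) js) = mset js"
  by (induction js) auto

lemma keys_nprod:
  assumes "(l',c) \<in> set (nprod_l js [(l,1)])"
  shows "int (sum_list l') = int (sum_list l) - sum_list js
     \<and> (even (length l') = (even (length l) = even (length js))) \<and> (0 \<notin> set l \<longrightarrow> 0 \<notin> set l')"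
proof -
  let ?js = "filter (\<lambda>j::int. j < 0) js @ filter (\<lambda>j. 0 \<le> j) js"
  have "sum_list ?js = sum_list js" "length ?js = length js"
    by (metis mset_split_filter sum_mset_sum_list, metis mset_split_filter size_mset)
  thus ?thesis using keys_apply[of l' c ?js l] assms by (simp add: nprod_l_def)
qed

lemma keys_hpow:
  assumes "(l',c) \<in> set (hpow_l1 k n l)"
  shows "int (sum_list l') = int (sum_list l) - (n - int k + 1)
     \<and> (even (length l') = (even (length l) = even k)) \<and> (0 \<notin> set l \<longrightarrow> 0 \<notin> set l')"
proof -
  from assms obtain js lo hi E where "js \<in> set (enum lo hi E k (n - int k + 1))" "(l',c) \<in> set (nprod_l js [(l,1)])"
    by (auto simp: hpow_l1_def Let_def)
  thus ?thesis using keys_nprod enum_len_sum by metis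
qed

lemma hpow_grd:
  assumes "grd w p v" "int w' = int w - (n - int k + 1)"
  shows "grd w' (p = even k) (hpow_mode k n v)"
proof -
  define f where "f = (\<lambda>a b. \<Sum>js\<in>tuples k (n - int k + 1) (wt a). nprod js (basis_vec a) b)"
  have hv: "hpow_mode k n v = lin f v" by (simp add: hpow_mode_def f_def)
  have fin: "finite (supp v)" using assms(1) by (simp add: grd_def M1_def)
  have fa: "f a = vl (hpow_l1 k n (sorted_list_of_multiset a))" for a
    using hpow_l1_correct[where k=k and n=n and l="sorted_list_of_multiset a"] by (simp add: f_def)
  have P: "finite (supp (f a)) \<and> (\<forall>b\<in>supp (f a). 0 \<notin># b \<and> wt b = w' \<and> even (size b) = (p = even k))"
    if a: "a \<in> supp v" for a
  proof -
    let ?l = "sorted_list_of_multiset a"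
    have al: "mset ?l = a" by simp
    have ainfo: "0 \<notin># a" "wt a = w" "even (size a) = p" using a assms(1) by (auto simp: grd_def M1_def)
    have sub: "supp (f a) \<subseteq> mset ` fst ` set (hpow_l1 k n ?l)" unfolding fa by (rule supp_vl)
    have all: "\<forall>b\<in>mset ` fst ` set (hpow_l1 k n ?l). 0 \<notin># b \<and> wt b = w' \<and> even (size b) = (p = even k)"
    proof
      fix b assume "b \<in> mset ` fst ` set (hpow_l1 k n ?l)"
      then obtain l' c where lc: "(l',c) \<in> set (hpow_l1 k n ?l)" "b = mset l'" by auto
      note K = keys_hpow[OF lc(1)]
      have "sum_list ?l = w" "length ?l = size a" "0 \<notin> set ?l"
        using ainfo al by (metis sum_mset_sum_list wt_def, metis size_mset, simp)
      thus "0 \<notin># b \<and> wt b = w' \<and> even (size b) = (p = even k)"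
        using K lc(2) ainfo assms(2) by (auto simp: wt_def sum_mset_sum_list)
    qed
    have "finite (supp (f a))" using sub by (rule finite_subset) simp
    moreover have "\<forall>b\<in>supp (f a). 0 \<notin># b \<and> wt b = w' \<and> even (size b) = (p = even k)"
      using sub all by blast
    ultimately show ?thesis by blast
  qed
  have "supp (hpow_mode k n v) \<subseteq> (\<Union>a\<in>supp v. supp (f a))" unfolding hv by (rule lin_supp)
  with P fin show ?thesis by (auto simp: grd_def M1_def intro: finite_subset)
qed

lemma supp_Lop: "supp (Lop n v) = supp (hpow_mode 2 (n+1) v)"
  by (auto simp: supp_def Lop_def)

lemma Lop_grd:
  assumes "grd w p v" "int w' = int w - n"
  shows "grd w' p (Lop n v)"
proof -
  have "grd w' (p = even (2::nat)) (hpow_mode 2 (n+1) v)"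
    by (rule hpow_grd[OF assms(1)]) (use assms(2) in simp)
  thus ?thesis by (simp add: grd_def M1_def supp_Lop)
qed

lemma basis_grd: "0 \<notin># a \<Longrightarrow> grd (wt a) (even (size a)) (basis_vec a)"
  by (auto simp: grd_def M1_def supp_def basis_vec_def)



lemma cspan_lincomb:
  assumes "finite I" "\<forall>i\<in>I. g i \<in> cspan S"
  shows "(\<lambda>b. \<Sum>i\<in>I. d i * g i b) \<in> cspan S"
proof -
  from assms(2) have "\<forall>i\<in>I. \<exists>A c. finite A \<and> A \<subseteq> S \<and> g i = (\<lambda>b. \<Sum>u\<in>A. c u * u b)"
    by (simp add: cspan_def)
  then obtain A c where Ac: "\<And>i. i \<in> I \<Longrightarrow> finite (A i) \<and> A i \<subseteq> S \<and> g i = (\<lambda>b. \<Sum>u\<in>A i. c i u * u b)"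
    by metis
  define B where "B = (\<Union>i\<in>I. A i)"
  define cc where "cc u = (\<Sum>i\<in>I. d i * (if u \<in> A i then c i u else 0))" for u
  have finB: "finite B" using Ac assms(1) by (auto simp: B_def)
  have BS: "B \<subseteq> S" using Ac by (auto simp: B_def)
  have "(\<lambda>b. \<Sum>i\<in>I. d i * g i b) = (\<lambda>b. \<Sum>u\<in>B. cc u * u b)"
  proof
    fix b
    have "(\<Sum>u\<in>B. cc u * u b) = (\<Sum>u\<in>B. \<Sum>i\<in>I. d i * (if u \<in> A i then c i u * u b else 0))"
      unfolding cc_def sum_distrib_right by (intro sum.cong refl) auto
    also have "\<dots> = (\<Sum>i\<in>I. d i * (\<Sum>u\<in>B. (if u \<in> A i then c i u * u b else 0)))"
      by (subst sum.swap) (simp add: sum_distrib_left)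
    also have "\<dots> = (\<Sum>i\<in>I. d i * g i b)"
    proof (rule sum.cong[OF refl])
      fix i assume i: "i \<in> I"
      have "A i \<subseteq> B" using i by (auto simp: B_def)
      hence "(\<Sum>u\<in>B. (if u \<in> A i then c i u * u b else 0)) = (\<Sum>u\<in>A i. c i u * u b)"
        using finB by (simp add: sum.inter_restrict[symmetric] Int_absorb1 Int_commute)
      thus "d i * (\<Sum>u\<in>B. (if u \<in> A i then c i u * u b else 0)) = d i * g i b"
        using Ac[OF i] by simp
    qed
    finally show "(\<Sum>i\<in>I. d i * g i b) = (\<Sum>u\<in>B. cc u * u b)" by simp
  qed
  thus ?thesis using finB BS by (auto simp: cspan_def)
qed

lemma cspan_single: "u \<in> S \<Longrightarrow> (\<lambda>b. d * u b) \<in> cspan S"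
  unfolding cspan_def by (rule CollectI, rule exI[of _ "{u}"], rule exI[of _ "\<lambda>_. d"]) simp

definition SS :: "vec set" where
  "SS = Lop (-1) ` M1plus_wt 9 \<union> Lop (-3) ` M1plus_wt 7
           \<union> {hpow_mode 4 (-3) (basis_vec {#1,1,1,1#}), (Lop (-2) ^^ 5) vacuum}"

lemma m_lits: "\<forall>m\<in>set m9. sum_list m = 9 \<and> even (length m) \<and> 0 \<notin> set m"
  "\<forall>m\<in>set m7. sum_list m = 7 \<and> even (length m) \<and> 0 \<notin> set m"
  by code_simp+

lemma basis_in: "sum_list m = w \<Longrightarrow> even (length m) \<Longrightarrow> 0 \<notin> set m \<Longrightarrow> basis_vec (mset m) \<in> M1plus_wt w"
  using basis_grd[of "mset m"] by (simp add: M1plus_grd wt_def sum_mset_sum_list)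

lemma vl_lin_single: "vl (lin_l F [(m,1)]) = vl (F m)"
  by (simp add: fun_eq_iff vl_lin_l)

lemma G9: "m \<in> set m9 \<Longrightarrow> vl (hpow_l1 2 0 m) \<in> cspan SS"
proof -
  assume m: "m \<in> set m9"
  hence "sum_list m = 9" "even (length m)" "0 \<notin> set m" using m_lits(1) by auto
  hence "basis_vec (mset m) \<in> M1plus_wt 9" by (rule basis_in)
  hence "Lop (-1) (basis_vec (mset m)) \<in> SS" unfolding SS_def by blast
  moreover have "vl (hpow_l1 2 0 m) = (\<lambda>b. 2 * Lop (-1) (basis_vec (mset m)) b)"
    by (simp add: basis_vl Lop_vl vl_lin_single)
  ultimately show ?thesis by (simp add: cspan_single)
qed

lemma G7: "m \<in> set m7 \<Longrightarrow> vl (hpow_l1 2 (-2) m) \<in> cspan SS"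
proof -
  assume m: "m \<in> set m7"
  hence "sum_list m = 7" "even (length m)" "0 \<notin> set m" using m_lits(2) by auto
  hence "basis_vec (mset m) \<in> M1plus_wt 7" by (rule basis_in)
  hence "Lop (-3) (basis_vec (mset m)) \<in> SS" unfolding SS_def by blast
  moreover have "vl (hpow_l1 2 (-2) m) = (\<lambda>b. 2 * Lop (-3) (basis_vec (mset m)) b)"
    by (simp add: basis_vl Lop_vl vl_lin_single)
  ultimately show ?thesis by (simp add: cspan_single)
qed

lemma GX: "vl (hpow_l1 4 (-3) [1,1,1,1]) \<in> cspan SS"
proof -
  have e: "{#1,1,1,1#} = mset [1,1,1,1::nat]" by simp
  have eq: "hpow_mode 4 (-3) (basis_vec {#1,1,1,1#}) = vl (hpow_l1 4 (-3) [1,1,1,1])"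
    unfolding e by (simp only: basis_vl hpow_vl vl_lin_single)
  have mem: "hpow_mode 4 (-3) (basis_vec {#1,1,1,1#}) \<in> SS" unfolding SS_def by blast
  have "(\<lambda>b. 1 * hpow_mode 4 (-3) (basis_vec {#1,1,1,1#}) b) \<in> cspan SS" by (rule cspan_single[OF mem])
  thus ?thesis by (simp only: eq mult.left_neutral)
qed

lemma lin_scale: "lin f (\<lambda>b. c * v b) = (\<lambda>b'. c * lin f v b')"
proof (cases "c = 0")
  case True then show ?thesis by (simp add: lin_def supp_def)
next
  case False
  hence "supp (\<lambda>b. c * v b) = supp v" by (simp add: supp_def)
  then show ?thesis by (simp add: lin_def sum_distrib_left mult.assoc)
qed

lemma Lop_scale: "Lop n (\<lambda>b. c * v b) = (\<lambda>b. c * Lop n v b)"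
  by (simp add: Lop_def hpow_mode_def lin_scale)

lemma Lop_pow: "(Lop (-2) ^^ j) vacuum = (\<lambda>b. (1/2)^j * vl ((lin_l (hpow_l1 2 (-1)) ^^ j) [([],1)]) b)"
proof (induction j)
  case 0
  show ?case by (simp add: vacuum_def basis_vl[of "[]", simplified])
next
  case (Suc j)
  show ?case by (simp add: Suc Lop_scale Lop_vl)
qed

lemma GY: "vl Yl \<in> cspan SS"
proof -
  have eq: "vl Yl = (\<lambda>b. 32 * (Lop (-2) ^^ 5) vacuum b)"
    by (simp add: Lop_pow Yl_def fun_eq_iff power_divide)
  have mem: "(Lop (-2) ^^ 5) vacuum \<in> SS" unfolding SS_def by blast
  show ?thesis unfolding eq by (rule cspan_single[OF mem])
qed

lemma Gs_in: "\<forall>G\<in>set Gs. vl G \<in> cspan SS"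
  unfolding Gs_def set_append set_map list.set using G9 G7 GX GY by blast

lemma e_in:
  assumes "q < 22"
  shows "vl [(P10!q,1)] \<in> cspan SS"
proof -
  have D: "(of_int Dc :: complex) \<noteq> 0" by (simp add: Dc_def)
  have "vl [(P10!q,1)] = (\<lambda>b. \<Sum>i\<in>{..<22}. (of_int (Clit!q!i) / of_int Dc) * vl (Gs!i) b)"
  proof
    fix b
    have "vl [(P10!q,1)] b = (\<Sum>i<22. of_int (Clit!q!i) * vl (Gs!i) b) / of_int Dc"
      using cert[OF assms, of b] D by (simp add: field_simps)
    thus "vl [(P10!q,1)] b = (\<Sum>i\<in>{..<22}. (of_int (Clit!q!i) / of_int Dc) * vl (Gs!i) b)"
      by (simp add: sum_divide_distrib)
  qed
  moreover have "(\<lambda>b. \<Sum>i\<in>{..<22::nat}. (of_int (Clit!q!i) / of_int Dc) * vl (Gs!i) b) \<in> cspan SS"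
    by (rule cspan_lincomb) (use Gs_in len_lits in auto)
  ultimately show ?thesis by (simp only:)
qed

lemma lincomb_M1plus:
  assumes "finite A" "A \<subseteq> M1plus_wt m"
  shows "(\<lambda>b. \<Sum>u\<in>A. c u * u b) \<in> M1plus_wt m"
proof -
  have sub: "supp (\<lambda>b. \<Sum>u\<in>A. c u * u b) \<subseteq> (\<Union>u\<in>A. supp u)"
  proof
    fix b assume "b \<in> supp (\<lambda>b. \<Sum>u\<in>A. c u * u b)"
    hence "(\<Sum>u\<in>A. c u * u b) \<noteq> 0" by (simp add: supp_def)
    then obtain u where "u \<in> A" "c u * u b \<noteq> 0" by (meson sum.neutral)
    thus "b \<in> (\<Union>u\<in>A. supp u)" by (auto simp: supp_def)
  qed
  have "finite (\<Union>u\<in>A. supp u)" using assms by (auto simp: M1plus_wt_def M1_def)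
  with sub assms show ?thesis
    by (auto simp: M1plus_wt_def M1_def intro: finite_subset dest!: set_mp[OF sub])
qed

lemma SS_sub: "SS \<subseteq> M1plus_wt 10"
proof -
  have "Lop (-1) v \<in> M1plus_wt 10" if "v \<in> M1plus_wt 9" for v
    using Lop_grd[of 9 True v 10 "-1"] that by (simp add: M1plus_grd)
  moreover have "Lop (-3) v \<in> M1plus_wt 10" if "v \<in> M1plus_wt 7" for v
    using Lop_grd[of 7 True v 10 "-3"] that by (simp add: M1plus_grd)
  moreover have "hpow_mode 4 (-3) (basis_vec {#1,1,1,1#}) \<in> M1plus_wt 10"
  proof -
    have w4: "wt {#1,1,1,1::nat#} = 4" by (simp add: wt_def)
    have s4: "even (size {#1,1,1,1::nat#})" by simp
    have "grd 4 True (basis_vec {#1,1,1,1#})" using basis_grd[of "{#1,1,1,1#}"] unfolding w4 using s4 by simp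
    from hpow_grd[OF this, of 10 "-3" 4] show ?thesis by (simp add: M1plus_grd)
  qed
  moreover have Yg: "grd (2*j) True ((Lop (-2) ^^ j) vacuum)" for j
  proof (induction j)
    case 0 then show ?case using basis_grd[of "{#}"] by (simp add: vacuum_def wt_def)
  next
    case (Suc j) then show ?case using Lop_grd[of "2*j" True _ "2 * Suc j" "-2"] by simp
  qed
  moreover have "grd 10 True ((Lop (-2) ^^ 5) vacuum)" using Yg[of 5] by simp
  ultimately show ?thesis by (auto simp: SS_def M1plus_grd)
qed

theorem lemma4p3:
  shows "cspan (Lop (-1) ` M1plus_wt 9 \<union> Lop (-3) ` M1plus_wt 7
           \<union> {hpow_mode 4 (-3) (basis_vec {#1,1,1,1#}), (Lop (-2) ^^ 5) vacuum})
         = M1plus_wt 10"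
  unfolding SS_def[symmetric]
proof
  show "cspan SS \<subseteq> M1plus_wt 10"
  proof
    fix v assume "v \<in> cspan SS"
    then obtain A c where "finite A" "A \<subseteq> SS" "v = (\<lambda>b. \<Sum>u\<in>A. c u * u b)"
      by (auto simp: cspan_def)
    thus "v \<in> M1plus_wt 10" using SS_sub lincomb_M1plus by blast
  qed
next
  show "M1plus_wt 10 \<subseteq> cspan SS"
  proof
    fix v assume v: "v \<in> M1plus_wt 10"
    have "v = (\<lambda>b. \<Sum>a\<in>supp v. v a * basis_vec a b)"
    proof
      fix b
      have "(\<Sum>a\<in>supp v. v a * basis_vec a b) = (\<Sum>a\<in>supp v. if a = b then v b else 0)"
        by (rule sum.cong) (auto simp: basis_vec_def)
      also have "\<dots> = v b" using v by (auto simp: sum.delta M1plus_wt_def M1_def supp_def)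
      finally show "v b = (\<Sum>a\<in>supp v. v a * basis_vec a b)" by simp
    qed
    moreover have "\<forall>a\<in>supp v. basis_vec a \<in> cspan SS"
    proof
      fix a assume a: "a \<in> supp v"
      hence "0 \<notin># a" "wt a = 10" "even (size a)" using v by (auto simp: M1plus_wt_def M1_def)
      then obtain q where "q < 22" "a = mset (P10!q)" using P10_complete by blast
      thus "basis_vec a \<in> cspan SS" using e_in by (simp add: basis_vl)
    qed
    moreover have "finite (supp v)" using v by (simp add: M1plus_wt_def M1_def)
    ultimately show "v \<in> cspan SS" using cspan_lincomb[of "supp v" basis_vec SS v] by simp
  qed
qed


end
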